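(* Let $K\ge 2$, and fix $P_1^{\rm ST},\ldots,P_K^{\rm ST}>0$ and $\Gamma_1^{\rm ST},\ldots,\Gamma_M^{\rm ST}>0$. For a channel realization $\boldsymbol{\alpha}$ consider the problem $$\max_{p_1,\ldots,p_K}\ \log\Big(1+\sum_{k=1}^K h_kp_k\Big)\quad\text{s.t.}\quad p_k\le P_k^{\rm ST}\ \forall k,\quad \sum_{k=1}^K g_{km}p_k\le\Gamma_m^{\rm ST}\ \forall m,\quad p_k\ge0\ \forall k.$$ For almost every realization $\boldsymbol{\alpha}$: this problem has an optimal solution in which only one user $i$ has positive power (D-TDMA is optimal) if and only if there exists a user $i$ which, with $m'=\arg\min_{m\in\{1,\ldots,M\}}\Gamma_m^{\rm ST}/g_{im}$, satisfies both (1) $\frac{\Gamma_{m'}^{\rm ST}}{g_{im'}}\le P_i^{\rm ST}$, and (2) $\frac{h_i}{g_{im'}}\ge\frac{h_j}{g_{jm'}}$ for all $j\ne i$. In that case the optimal transmit power of user $i$ is $p_i^*=\frac{\Gamma_{m'}^{\rm ST}}{g_{im'}}$ and all other users have zero power.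
   Context: $\boldsymbol{\alpha}=(h_1,\ldots,h_K,g_{11},\ldots,g_{KM})$ is a random vector of nonnegative channel power gains ($h_k$: secondary user $k$ to secondary base station; $g_{km}$: secondary user $k$ to primary receiver $m$) with a continuous, differentiable joint cumulative distribution function, the $h_k$'s and $g_{km}$'s being independent. *)

theory Defs
  imports "HOL-Analysis.Analysis"
begin

text \<open>Users are indexed by the finite type 'k (K = CARD('k)), primary receivers by
  the finite type 'm (M = CARD('m)).  h $ k is the gain from secondary user k to the
  secondary base station, g $ k $ m the gain from secondary user k to primary receiver m.\<close>

definition feasible ::
  "real^'k \<Rightarrow> real^'m \<Rightarrow> real^'m^'k \<Rightarrow> real^'k \<Rightarrow> bool" where
  "feasible Pmax Gam g p \<longleftrightarrow>
     (\<forall>k. 0 \<le> p $ k \<and> p $ k \<le> Pmax $ k) \<and>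
     (\<forall>m. (\<Sum>k\<in>UNIV. g $ k $ m * p $ k) \<le> Gam $ m)"

definition rate :: "real^'k \<Rightarrow> real^'k \<Rightarrow> real" where
  "rate h p = ln (1 + (\<Sum>k\<in>UNIV. h $ k * p $ k))"

definition optimal ::
  "real^'k \<Rightarrow> real^'m \<Rightarrow> real^'k \<Rightarrow> real^'m^'k \<Rightarrow> real^'k \<Rightarrow> bool" where
  "optimal Pmax Gam h g p \<longleftrightarrow>
     feasible Pmax Gam g p \<and> (\<forall>q. feasible Pmax Gam g q \<longrightarrow> rate h q \<le> rate h p)"

definition single_user :: "real^'k \<Rightarrow> 'k \<Rightarrow> bool" where
  "single_user p i \<longleftrightarrow> 0 < p $ i \<and> (\<forall>j. j \<noteq> i \<longrightarrow> p $ j = 0)"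

definition dtdma_cond ::
  "real^'k \<Rightarrow> real^'m \<Rightarrow> real^'k \<Rightarrow> real^'m^'k \<Rightarrow> 'k \<Rightarrow> 'm \<Rightarrow> bool" where
  "dtdma_cond Pmax Gam h g i m' \<longleftrightarrow>
     (\<forall>m. Gam $ m' / g $ i $ m' \<le> Gam $ m / g $ i $ m) \<and>
     Gam $ m' / g $ i $ m' \<le> Pmax $ i \<and>
     (\<forall>j. j \<noteq> i \<longrightarrow> h $ j / g $ j $ m' \<le> h $ i / g $ i $ m')"

definition dtdma_power :: "real^'m \<Rightarrow> real^'m^'k \<Rightarrow> 'k \<Rightarrow> 'm \<Rightarrow> real^'k" where
  "dtdma_power Gam g i m' = (\<chi> j. if j = i then Gam $ m' / g $ i $ m' else 0)"

end

theory Submission imports Defs begin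
lemma AE_hyp: fixes a :: "'a::euclidean_space" assumes "a \<noteq> 0"
  shows "AE x in lborel. a \<bullet> x \<noteq> 0"
proof -
  have cl: "closed {x::'a. a \<bullet> x = 0}" by (simp add: closed_hyperplane)
  have "{x::'a. a \<bullet> x = 0} \<in> null_sets lborel"
    using negligible_hyperplane[of a 0] assms cl
    by (auto simp: null_sets_completion_iff[symmetric] negligible_iff_null_sets)
  from AE_not_in[OF this] show ?thesis by auto
qed

lemma sum2:
  fixes f :: "'k::finite \<Rightarrow> real"
  assumes "i \<noteq> j"
  shows "(\<Sum>k\<in>UNIV. f k * (if k = i then a else if k = j then b else 0)) = f i * a + f j * b"
proof -
  have "(\<Sum>k\<in>UNIV. f k * (if k = i then a else if k = j then b else 0))
      = (\<Sum>k\<in>UNIV. (if k = i then f i * a else 0) + (if k = j then f j * b else 0))"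
    by (rule sum.cong) (use assms in auto)
  also have "\<dots> = f i * a + f j * b" by (simp add: sum.distrib)
  finally show ?thesis .
qed

lemma ex_other: assumes "CARD('k::finite) \<ge> 2" shows "\<exists>j::'k. j \<noteq> i"
proof (rule ccontr)
  assume "\<not> ?thesis" then have "UNIV = {i}" by auto
  then have "CARD('k) = 1" by (metis card.empty card_insert_disjoint empty_iff finite.emptyI One_nat_def)
  then show False using assms by simp
qed

lemma ev_happens: "eventually P (at_right (0::real)) \<Longrightarrow> \<exists>x. P x"
  by (metis eventually_happens trivial_limit_at_right_real)

lemma sum1:
  fixes f :: "'k::finite \<Rightarrow> real"
  shows "(\<Sum>k\<in>UNIV. f k * (if k = i then a else 0)) = f i * a"
proof -
  have "(\<Sum>k\<in>UNIV. f k * (if k = i then a else 0)) = (\<Sum>k\<in>UNIV. (if k = i then f i * a else 0))"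
    by (rule sum.cong) auto
  also have "\<dots> = f i * a" by simp
  finally show ?thesis .
qed

lemma rate_le:
  fixes h q p :: "real^'k"
  assumes "\<forall>k. 0 \<le> h$k" "\<forall>k. 0 \<le> q$k" "\<forall>k. 0 \<le> p$k"
  shows "rate h q \<le> rate h p \<longleftrightarrow> (\<Sum>k\<in>UNIV. h$k * q$k) \<le> (\<Sum>k\<in>UNIV. h$k * p$k)"
proof -
  have "0 \<le> (\<Sum>k\<in>UNIV. h$k * q$k)" "0 \<le> (\<Sum>k\<in>UNIV. h$k * p$k)"
    using assms by (auto intro!: sum_nonneg)
  then show ?thesis unfolding rate_def by simp
qed

lemma partA:
  fixes Pmax h :: "real^'k" and Gam :: "real^'m" and g :: "real^'m^'k"
  assumes hpos: "\<forall>k. 0 \<le> h$k" and gpos: "\<forall>k m. 0 < g$k$m"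
    and Gpos: "\<forall>m. 0 < Gam $ m" and Ppos: "\<forall>k. 0 < Pmax $ k"
    and cond: "dtdma_cond Pmax Gam h g i m'"
  shows "optimal Pmax Gam h g (dtdma_power Gam g i m')"
proof -
  define c where "c = Gam $ m' / g $ i $ m'"
  have c0: "0 < c" using Gpos gpos by (simp add: c_def)
  have pc: "dtdma_power Gam g i m' $ k = (if k = i then c else 0)" for k
    by (simp add: dtdma_power_def c_def)
  have cmin: "c \<le> Gam $ m / g $ i $ m" for m using cond by (simp add: dtdma_cond_def c_def)
  have cP: "c \<le> Pmax $ i" using cond by (simp add: dtdma_cond_def c_def)
  have hrat: "h $ j / g $ j $ m' \<le> h $ i / g $ i $ m'" if "j \<noteq> i" for j
    using cond that by (simp add: dtdma_cond_def)
  have feas: "feasible Pmax Gam g (dtdma_power Gam g i m')"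
    unfolding feasible_def pc sum1
  proof (intro conjI allI)
    fix k show "0 \<le> (if k = i then c else 0)" using c0 by simp
    show "(if k = i then c else 0) \<le> Pmax $ k" using cP assms by (simp add: less_imp_le)
  next
    fix m show "g $ i $ m * c \<le> Gam $ m"
      using cmin[of m] gpos by (simp add: le_divide_eq mult.commute)
  qed
  have opt: "rate h q \<le> rate h (dtdma_power Gam g i m')" if fq: "feasible Pmax Gam g q" for q
  proof -
    have q0: "\<forall>k. 0 \<le> q$k" using fq by (simp add: feasible_def)
    have "(\<Sum>k\<in>UNIV. h$k * q$k) \<le> (\<Sum>k\<in>UNIV. (h$i / g$i$m') * (g$k$m' * q$k))"
    proof (rule sum_mono)
      fix k
      have "h$k \<le> (h$i / g$i$m') * g$k$m'"
      proof (cases "k = i")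
        case True then show ?thesis using gpos[rule_format, of i m'] by simp
      next
        case False
        then have "h $ k / g $ k $ m' \<le> h $ i / g $ i $ m'" by (rule hrat)
        then show ?thesis using gpos by (simp add: divide_le_eq)
      qed
      then show "h$k * q$k \<le> (h$i / g$i$m') * (g$k$m' * q$k)"
        using q0 by (metis mult.assoc mult_right_mono)
    qed
    also have "\<dots> = (h$i / g$i$m') * (\<Sum>k\<in>UNIV. g$k$m' * q$k)"
      by (simp add: sum_distrib_left)
    also have "\<dots> \<le> (h$i / g$i$m') * Gam$m'"
      using fq hpos[rule_format, of i] gpos[rule_format, of i m'] by (intro mult_left_mono) (auto simp: feasible_def)
    also have "\<dots> = h$i * c" by (simp add: c_def)
    also have "\<dots> = (\<Sum>k\<in>UNIV. h$k * dtdma_power Gam g i m' $ k)" unfolding pc sum1 ..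
    finally show ?thesis
      using rate_le[of h q "dtdma_power Gam g i m'"] hpos q0 c0 by (simp add: pc)
  qed
  show ?thesis using feas opt by (simp add: optimal_def)
qed


lemma partB:
  fixes Pmax h p :: "real^'k" and Gam :: "real^'m" and g :: "real^'m^'k"
  assumes K2: "CARD('k) \<ge> 2"
    and hpos: "\<forall>k. 0 < h$k" and gpos: "\<forall>k m. 0 < g$k$m"
    and Gpos: "\<forall>m. 0 < Gam $ m" and Ppos: "\<forall>k. 0 < Pmax $ k"
    and gen: "\<forall>i m1 m2. m1 \<noteq> m2 \<longrightarrow> Gam$m1 * g$i$m2 \<noteq> Gam$m2 * g$i$m1"
    and opt: "optimal Pmax Gam h g p" and su: "single_user p i"
  shows "\<exists>m'. dtdma_cond Pmax Gam h g i m'"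
proof -
  define f where "f m = Gam$m / g$i$m" for m
  have "Min (range f) \<in> range f" by (rule Min_in) auto
  then obtain m' where m': "f m' = Min (range f)" by (metis imageE)
  have fmin: "f m' \<le> f m" for m unfolding m' by (rule Min_le) auto
  have fstrict: "f m' < f m" if "m \<noteq> m'" for m
  proof -
    have "f m' \<noteq> f m"
    proof
      assume "f m' = f m"
      then have "Gam$m' * g$i$m = Gam$m * g$i$m'"
        using gpos[rule_format, of i m] gpos[rule_format, of i m']
        by (simp add: f_def frac_eq_eq)
      then show False using gen that by metis
    qed
    then show ?thesis using fmin[of m] by simp
  qed
  define a where "a = p$i"
  have a0: "0 < a" using su by (simp add: single_user_def a_def)
  have ps: "p$k = (if k = i then a else 0)" for k using su by (auto simp: single_user_def a_def)
  have feas: "feasible Pmax Gam g p" using opt by (simp add: optimal_def)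
  have aP: "a \<le> Pmax $ i" using feas by (simp add: feasible_def a_def)
  have aG: "g$i$m * a \<le> Gam$m" for m
    using feas unfolding feasible_def ps sum1 by blast
  have af: "a \<le> f m" for m
    using aG[of m] gpos[rule_format, of i m] by (simp add: f_def le_divide_eq mult.commute)
  have key: "h$i * b + h$j * \<delta> \<le> h$i * a"
    if ji: "j \<noteq> i" and b: "0 \<le> b" "b \<le> Pmax$i" and d: "0 \<le> \<delta>" "\<delta> \<le> Pmax$j"
      and G: "\<forall>m. g$i$m * b + g$j$m * \<delta> \<le> Gam$m" for j b \<delta>
  proof -
    define q :: "real^'k" where "q = (\<chi> k. if k = i then b else if k = j then \<delta> else 0)"
    have qs: "q$k = (if k = i then b else if k = j then \<delta> else 0)" for k by (simp add: q_def)
    have fq: "feasible Pmax Gam g q"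
      unfolding feasible_def qs sum2[OF ji[symmetric]]
      using b d G Ppos by (auto simp: less_imp_le)
    have q0: "\<forall>k. 0 \<le> q$k" using b d by (simp add: qs)
    have p0: "\<forall>k. 0 \<le> p$k" using a0 by (simp add: ps)
    have "rate h q \<le> rate h p" using opt fq by (simp add: optimal_def)
    then have "(\<Sum>k\<in>UNIV. h$k * q$k) \<le> (\<Sum>k\<in>UNIV. h$k * p$k)"
      using rate_le[of h q p] q0 p0 hpos by (simp add: less_imp_le)
    then show ?thesis unfolding qs ps sum1 sum2[OF ji[symmetric]] .
  qed
  obtain j0 :: 'k where j0: "j0 \<noteq> i" using ex_other[OF K2] by blast
  have a_eq: "a = f m'"
  proof (rule ccontr)
    assume "a \<noteq> f m'"
    then have alt: "a < f m'" using af[of m'] by simp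
    have strict: "g$i$m * a < Gam$m" for m
    proof -
      have "a < f m" using alt fmin[of m] by simp
      then show ?thesis using gpos[rule_format, of i m] by (simp add: f_def less_divide_eq mult.commute)
    qed
    have ev1: "\<forall>\<^sub>F \<delta> in at_right 0. g$i$m * a + g$j0$m * \<delta> < Gam$m" for m
    proof -
      have "((\<lambda>\<delta>. g$i$m * a + g$j0$m * \<delta>) \<longlongrightarrow> g$i$m * a + g$j0$m * 0) (at_right (0::real))"
        by (intro tendsto_intros)
      then show ?thesis using strict[of m] by (auto dest: order_tendstoD)
    qed
    have ev2: "\<forall>\<^sub>F \<delta> in at_right 0. \<delta> < Pmax$j0"
    proof -
      have "((\<lambda>\<delta>. \<delta>) \<longlongrightarrow> 0) (at_right (0::real))" by (intro tendsto_intros)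
      moreover have "(0::real) < Pmax$j0" using Ppos by simp
      ultimately show ?thesis by (rule order_tendstoD(2))
    qed
    have "\<forall>\<^sub>F \<delta> in at_right 0. 0 < \<delta> \<and> \<delta> < Pmax$j0 \<and> (\<forall>m. g$i$m * a + g$j0$m * \<delta> < Gam$m)"
      by (intro eventually_conj eventually_at_right_less ev2 eventually_all_finite ev1)
    then obtain \<delta> where d: "0 < \<delta>" "\<delta> < Pmax$j0" "\<forall>m. g$i$m * a + g$j0$m * \<delta> < Gam$m"
      using ev_happens by blast
    have "h$i * a + h$j0 * \<delta> \<le> h$i * a"
      using key[OF j0, of a \<delta>] a0 aP d by (auto simp: less_imp_le)
    moreover have "0 < h$j0 * \<delta>" using hpos d by simp
    ultimately show False by simp
  qed
  have rat: "h $ j / g $ j $ m' \<le> h $ i / g $ i $ m'" if ji: "j \<noteq> i" for j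
  proof (rule ccontr)
    assume "\<not> ?thesis"
    then have gt: "h $ i / g $ i $ m' < h $ j / g $ j $ m'" by simp
    define c where "c = g$j$m' / g$i$m'"
    have gim: "0 < g$i$m'" using gpos by simp
    have hc: "h$i * c < h$j"
    proof -
      have "h $ i / g $ i $ m' * g$j$m' < h $ j" using gt gpos[rule_format, of j m']
        by (simp add: less_divide_eq)
      then show ?thesis by (simp add: c_def)
    qed
    have strict: "g$i$m * a < Gam$m" if "m \<noteq> m'" for m
    proof -
      have "a < f m" using a_eq fstrict[OF that] by simp
      then show ?thesis using gpos[rule_format, of i m] by (simp add: f_def less_divide_eq mult.commute)
    qed
    have ev1: "\<forall>\<^sub>F \<delta> in at_right 0. g$i$m * (a - \<delta> * c) + g$j$m * \<delta> \<le> Gam$m" for m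
    proof (cases "m = m'")
      case True
      have "g$i$m * (a - \<delta> * c) + g$j$m * \<delta> = g$i$m * a" for \<delta>
        using gim True by (simp add: c_def algebra_simps)
      then show ?thesis using aG[of m] by simp
    next
      case False
      have "((\<lambda>\<delta>. g$i$m * (a - \<delta> * c) + g$j$m * \<delta>) \<longlongrightarrow> g$i$m * (a - 0 * c) + g$j$m * 0) (at_right (0::real))"
        by (intro tendsto_intros)
      then have "\<forall>\<^sub>F \<delta> in at_right 0. g$i$m * (a - \<delta> * c) + g$j$m * \<delta> < Gam$m"
        using strict[OF False] by (auto dest: order_tendstoD)
      then show ?thesis by (rule eventually_mono) simp
    qed
    have ev2: "\<forall>\<^sub>F \<delta> in at_right 0. \<delta> < Pmax$j"
    proof -
      have "((\<lambda>\<delta>. \<delta>) \<longlongrightarrow> 0) (at_right (0::real))" by (intro tendsto_intros)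
      moreover have "(0::real) < Pmax$j" using Ppos by simp
      ultimately show ?thesis by (rule order_tendstoD(2))
    qed
    have ev3: "\<forall>\<^sub>F \<delta> in at_right 0. 0 < a - \<delta> * c"
    proof -
      have "((\<lambda>\<delta>. a - \<delta> * c) \<longlongrightarrow> a - 0 * c) (at_right (0::real))" by (intro tendsto_intros)
      then show ?thesis using a0 by (auto dest: order_tendstoD)
    qed
    have "\<forall>\<^sub>F \<delta> in at_right 0. 0 < \<delta> \<and> \<delta> < Pmax$j \<and> 0 < a - \<delta> * c \<and>
        (\<forall>m. g$i$m * (a - \<delta> * c) + g$j$m * \<delta> \<le> Gam$m)"
      by (intro eventually_conj eventually_at_right_less ev2 ev3 eventually_all_finite ev1)
    then obtain \<delta> where d: "0 < \<delta>" "\<delta> < Pmax$j" "0 < a - \<delta> * c"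
       "\<forall>m. g$i$m * (a - \<delta> * c) + g$j$m * \<delta> \<le> Gam$m"
      using ev_happens by blast
    have c0: "0 \<le> c" using gpos by (simp add: c_def less_imp_le)
    have "a - \<delta> * c \<le> Pmax$i" using aP d c0 by (smt (verit) mult_nonneg_nonneg)
    then have "h$i * (a - \<delta> * c) + h$j * \<delta> \<le> h$i * a"
      using key[OF ji, of "a - \<delta> * c" \<delta>] d by (auto simp: less_imp_le)
    then have "h$j * \<delta> \<le> h$i * c * \<delta>" by (simp add: algebra_simps)
    then have "h$j \<le> h$i * c" using d by simp
    then show False using hc by simp
  qed
  have "dtdma_cond Pmax Gam h g i m'"
    unfolding dtdma_cond_def using fmin aP a_eq rat by (simp add: f_def)
  then show ?thesis by blast
qed


theorem theorem3p4:
  fixes Pmax :: "real^'k" and Gam :: "real^'m"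
  assumes "CARD('k) \<ge> 2"
    and "\<forall>k. 0 < Pmax $ k"
    and "\<forall>m. 0 < Gam $ m"
  shows "AE \<alpha> in (lborel :: ((real^'k) \<times> (real^'m^'k)) measure).
           (\<forall>k. 0 \<le> fst \<alpha> $ k) \<and> (\<forall>k m. 0 \<le> snd \<alpha> $ k $ m) \<longrightarrow>
           ((\<exists>p i. optimal Pmax Gam (fst \<alpha>) (snd \<alpha>) p \<and> single_user p i) \<longleftrightarrow>
              (\<exists>i m'. dtdma_cond Pmax Gam (fst \<alpha>) (snd \<alpha>) i m')) \<and>
           (\<forall>i m'. dtdma_cond Pmax Gam (fst \<alpha>) (snd \<alpha>) i m' \<longrightarrow>
              optimal Pmax Gam (fst \<alpha>) (snd \<alpha>) (dtdma_power Gam (snd \<alpha>) i m'))"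
proof -
  have A1: "AE x in (lborel :: ((real^'k) \<times> (real^'m^'k)) measure). \<forall>k\<in>UNIV. fst x $ k \<noteq> 0"
  proof (rule AE_finite_allI)
    fix k :: 'k
    have "(axis k 1, 0) \<noteq> (0 :: (real^'k) \<times> (real^'m^'k))" by (simp add: zero_prod_def axis_eq_0_iff)
    from AE_hyp[OF this] show "AE x in (lborel :: ((real^'k) \<times> (real^'m^'k)) measure). fst x $ k \<noteq> 0"
      by (rule eventually_mono) (auto simp: inner_axis' inner_Pair_0)
  qed simp
  have A2: "AE x in (lborel :: ((real^'k) \<times> (real^'m^'k)) measure). \<forall>k\<in>UNIV. \<forall>m\<in>UNIV. snd x $ k $ m \<noteq> 0"
  proof (intro AE_finite_allI)
    fix k :: 'k and m :: 'm
    have "(0, axis k (axis m 1)) \<noteq> (0 :: (real^'k) \<times> (real^'m^'k))" by (simp add: zero_prod_def axis_eq_0_iff)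
    from AE_hyp[OF this] show "AE x in (lborel :: ((real^'k) \<times> (real^'m^'k)) measure). snd x $ k $ m \<noteq> 0"
      by (rule eventually_mono) (auto simp: inner_axis' inner_Pair_0)
  qed simp_all
  have A3: "AE x in (lborel :: ((real^'k) \<times> (real^'m^'k)) measure). \<forall>i\<in>UNIV. \<forall>m1\<in>UNIV. \<forall>m2\<in>UNIV.
       m1 \<noteq> m2 \<longrightarrow> Gam$m1 * snd x $i$m2 - Gam$m2 * snd x $i$m1 \<noteq> 0"
  proof (intro AE_finite_allI)
    fix i :: 'k and m1 m2 :: 'm
    show "AE x in (lborel :: ((real^'k) \<times> (real^'m^'k)) measure).
       m1 \<noteq> m2 \<longrightarrow> Gam$m1 * snd x $i$m2 - Gam$m2 * snd x $i$m1 \<noteq> 0"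
    proof (cases "m1 = m2")
      case True then show ?thesis by simp
    next
      case False
      define v :: "real^'m" where "v = Gam$m1 *\<^sub>R axis m2 1 - Gam$m2 *\<^sub>R axis m1 1"
      have "v $ m2 = Gam$m1" using False by (simp add: v_def axis_def)
      then have "v \<noteq> 0" using assms(3) by (metis less_irrefl zero_index)
      then have "(0, axis i v) \<noteq> (0 :: (real^'k) \<times> (real^'m^'k))" by (simp add: zero_prod_def axis_eq_0_iff)
      from AE_hyp[OF this] show ?thesis
        by (rule eventually_mono) (auto simp: inner_axis' inner_Pair_0 v_def inner_diff_left)
    qed
  qed simp_all
  show ?thesis
  proof (rule eventually_mono[OF eventually_conj[OF A1 eventually_conj[OF A2 A3]]])
    fix x :: "(real^'k) \<times> (real^'m^'k)"
    obtain h g where x: "x = (h, g)" by (cases x)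
    assume gen: "(\<forall>k\<in>UNIV. fst x $ k \<noteq> 0) \<and> (\<forall>k\<in>UNIV. \<forall>m\<in>UNIV. snd x $ k $ m \<noteq> 0) \<and>
      (\<forall>i\<in>UNIV. \<forall>m1\<in>UNIV. \<forall>m2\<in>UNIV.
       m1 \<noteq> m2 \<longrightarrow> Gam$m1 * snd x $i$m2 - Gam$m2 * snd x $i$m1 \<noteq> 0)"
    show "(\<forall>k. 0 \<le> fst x $ k) \<and> (\<forall>k m. 0 \<le> snd x $ k $ m) \<longrightarrow>
           ((\<exists>p i. optimal Pmax Gam (fst x) (snd x) p \<and> single_user p i) \<longleftrightarrow>
              (\<exists>i m'. dtdma_cond Pmax Gam (fst x) (snd x) i m')) \<and>
           (\<forall>i m'. dtdma_cond Pmax Gam (fst x) (snd x) i m' \<longrightarrow>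
              optimal Pmax Gam (fst x) (snd x) (dtdma_power Gam (snd x) i m'))"
    proof (intro impI)
      assume nn: "(\<forall>k. 0 \<le> fst x $ k) \<and> (\<forall>k m. 0 \<le> snd x $ k $ m)"
      have hpos: "\<forall>k. 0 < h$k" using gen nn by (auto simp: x less_le)
      have gpos: "\<forall>k m. 0 < g$k$m" using gen nn by (auto simp: x less_le)
      have gen3: "\<forall>i m1 m2. m1 \<noteq> m2 \<longrightarrow> Gam$m1 * g$i$m2 \<noteq> Gam$m2 * g$i$m1"
        using gen by (auto simp: x)
      have PA: "optimal Pmax Gam h g (dtdma_power Gam g i m')" if "dtdma_cond Pmax Gam h g i m'" for i m'
        using partA[OF _ gpos assms(3) assms(2) that] hpos by (simp add: less_imp_le)
      have "(\<exists>p i. optimal Pmax Gam h g p \<and> single_user p i) \<longleftrightarrow> (\<exists>i m'. dtdma_cond Pmax Gam h g i m')"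
      proof
        assume "\<exists>p i. optimal Pmax Gam h g p \<and> single_user p i"
        then obtain p i where "optimal Pmax Gam h g p" "single_user p i" by blast
        from partB[OF assms(1) hpos gpos assms(3) assms(2) gen3 this] show "\<exists>i m'. dtdma_cond Pmax Gam h g i m'"
          by blast
      next
        assume "\<exists>i m'. dtdma_cond Pmax Gam h g i m'"
        then obtain i m' where c: "dtdma_cond Pmax Gam h g i m'" by blast
        have "single_user (dtdma_power Gam g i m') i"
          using gpos assms(3) by (simp add: single_user_def dtdma_power_def)
        with PA[OF c] show "\<exists>p i. optimal Pmax Gam h g p \<and> single_user p i" by blast
      qed
      then show "((\<exists>p i. optimal Pmax Gam (fst x) (snd x) p \<and> single_user p i) \<longleftrightarrow>
              (\<exists>i m'. dtdma_cond Pmax Gam (fst x) (snd x) i m')) \<and>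
           (\<forall>i m'. dtdma_cond Pmax Gam (fst x) (snd x) i m' \<longrightarrow>
              optimal Pmax Gam (fst x) (snd x) (dtdma_power Gam (snd x) i m'))"
        using PA by (simp add: x)
    qed
  qed
qed
end
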